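(* Let $T=(V(T),E(T))$ be a rooted directed tree with $k\geq1$ vertices and root $r$. For a bijection $\phi\colon V(T)\to\{X_1,\dots,X_k\}$ set \[\langle T,\phi\rangle=\frac{\prod_{v\in V(T)\setminus\{r\}}\phi(v)}{\prod_{(v_1\to v_2)\in E(T)}\bigl(\phi(v_1)-\phi(v_2)\bigr)}\in\mathbb{Q}(X_1,\dots,X_k),\qquad \langle T\rangle=\sum_{\phi}\langle T,\phi\rangle,\] the sum running over all bijections $\phi\colon V(T)\to\{X_1,\dots,X_k\}$. Then $\langle T\rangle$ is a nonzero integer.
   Context: A rooted directed tree is a tree (connected acyclic graph) in which each edge carries an orientation (arbitrary, not necessarily towards or away from the root) and one vertex is distinguished as the root. $X_1,\dots,X_k$ are independent commuting variables. *)

theory Defs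
  imports Complex_Main "HOL-Library.FuncSet"
begin

text \<open>The underlying undirected graph is a tree:
  no loops, connected, and exactly |V| - 1 edges (this also excludes antiparallel
  pairs, since then fewer than |V|-1 undirected edges would remain).\<close>
definition rooted_directed_tree :: "'a set \<Rightarrow> ('a \<times> 'a) set \<Rightarrow> 'a \<Rightarrow> bool" where
  "rooted_directed_tree V E r \<longleftrightarrow>
     finite V \<and> r \<in> V \<and> E \<subseteq> V \<times> V \<and> (\<forall>(a,b)\<in>E. a \<noteq> b) \<and>
     card E = card V - 1 \<and>
     (\<forall>u\<in>V. \<forall>w\<in>V. (u, w) \<in> (E \<union> E\<inverse>)\<^sup>*)"

text \<open>Bijections phi : V \<rightarrow> {X_1..X_k}, encoded by the index bijection V \<rightarrow> {1..k}.\<close>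
definition labelings :: "'a set \<Rightarrow> ('a \<Rightarrow> nat) set" where
  "labelings V = {\<sigma> \<in> V \<rightarrow>\<^sub>E {1..card V}. bij_betw \<sigma> V {1..card V}}"

text \<open>The rational function <T> evaluated at the point X_i := x i.\<close>
definition tree_bracket_at :: "'a set \<Rightarrow> ('a \<times> 'a) set \<Rightarrow> 'a \<Rightarrow> (nat \<Rightarrow> rat) \<Rightarrow> rat" where
  "tree_bracket_at V E r x =
     (\<Sum>\<sigma>\<in>labelings V.
        (\<Prod>v\<in>V - {r}. x (\<sigma> v)) / (\<Prod>(a,b)\<in>E. x (\<sigma> a) - x (\<sigma> b)))"

end

theory Submission
  imports Defs
begin

definition Bij :: "'a set \<Rightarrow> 'b set \<Rightarrow> ('a \<Rightarrow> 'b) set" where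
  "Bij V B = {\<phi> \<in> V \<rightarrow>\<^sub>E B. bij_betw \<phi> V B}"

lemma finite_Bij: "finite V \<Longrightarrow> finite B \<Longrightarrow> finite (Bij V B)"
  unfolding Bij_def by (rule finite_subset[OF _ finite_PiE[of V "\<lambda>_. B"]]) auto

lemma Bij_insert_bij:
  assumes "x \<notin> V"
  shows "bij_betw (\<lambda>\<phi>. (\<phi> x, restrict \<phi> V)) (Bij (insert x V) B) (SIGMA b:B. Bij V (B - {b}))"
proof (rule bij_betw_byWitness[where f'="\<lambda>(b,\<psi>). \<psi>(x:=b)"])
  show "\<forall>a\<in>Bij (insert x V) B. (case (a x, restrict a V) of (b, \<psi>) \<Rightarrow> \<psi>(x := b)) = a"
    using assms by (auto simp: Bij_def fun_eq_iff PiE_def extensional_def)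
  show "\<forall>a'\<in>SIGMA b:B. Bij V (B - {b}). (\<lambda>\<phi>. (\<phi> x, restrict \<phi> V)) (case a' of (b, \<psi>) \<Rightarrow> \<psi>(x := b)) = a'"
    using assms by (auto simp: Bij_def fun_eq_iff PiE_def extensional_def)
  show "(\<lambda>\<phi>. (\<phi> x, restrict \<phi> V)) ` Bij (insert x V) B \<subseteq> (SIGMA b:B. Bij V (B - {b}))"
  proof safe
    fix \<phi> assume p: "\<phi> \<in> Bij (insert x V) B"
    then show "\<phi> x \<in> B" by (auto simp: Bij_def)
    have "bij_betw \<phi> V (B - {\<phi> x})" using p assms unfolding Bij_def
      by (auto simp: bij_betw_def inj_on_def image_iff)
    then show "restrict \<phi> V \<in> Bij V (B - {\<phi> x})"
      using p by (auto simp: Bij_def bij_betw_def inj_on_def)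
  qed
  show "(\<lambda>(b, \<psi>). \<psi>(x := b)) ` (SIGMA b:B. Bij V (B - {b})) \<subseteq> Bij (insert x V) B"
  proof safe
    fix b \<psi> assume b: "b \<in> B" and p: "\<psi> \<in> Bij V (B - {b})"
    have "bij_betw \<psi> V (B - {b})" using p unfolding Bij_def by auto
    then have "bij_betw (\<psi>(x:=b)) (insert x V) B"
      using assms b by (auto simp: bij_betw_def inj_on_def image_iff)
    then show "\<psi>(x := b) \<in> Bij (insert x V) B"
      using b p assms by (auto simp: Bij_def PiE_def extensional_def insert_absorb)
  qed
qed

lemma sum_Bij_insert:
  assumes "x \<notin> V" "finite V" "finite B"
  shows "(\<Sum>\<phi>\<in>Bij (insert x V) B. f \<phi>) = (\<Sum>b\<in>B. \<Sum>\<psi>\<in>Bij V (B - {b}). f (\<psi>(x:=b)))"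
proof -
  have "(\<Sum>b\<in>B. \<Sum>\<psi>\<in>Bij V (B - {b}). f (\<psi>(x:=b))) = (\<Sum>(b,\<psi>)\<in>(SIGMA b:B. Bij V (B - {b})). f (\<psi>(x:=b)))"
    using assms by (intro sum.Sigma) (auto intro: finite_Bij)
  also have "\<dots> = (\<Sum>\<phi>\<in>Bij (insert x V) B. (\<lambda>(b,\<psi>). f (\<psi>(x:=b))) (\<phi> x, restrict \<phi> V))"
    by (rule sum.reindex_bij_betw[OF Bij_insert_bij[OF assms(1)], symmetric])
  also have "\<dots> = (\<Sum>\<phi>\<in>Bij (insert x V) B. f \<phi>)"
  proof (rule sum.cong)
    fix \<phi> assume "\<phi> \<in> Bij (insert x V) B"
    then have "(restrict \<phi> V)(x := \<phi> x) = \<phi>" using assms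
      by (auto simp: Bij_def fun_eq_iff PiE_def extensional_def)
    then show "(\<lambda>(b,\<psi>). f (\<psi>(x:=b))) (\<phi> x, restrict \<phi> V) = f \<phi>" by simp
  qed simp
  finally show ?thesis ..
qed

lemma Bij_split_bij:
  assumes "V1 \<inter> V2 = {}" "finite V1"
  shows "bij_betw (\<lambda>\<phi>. (\<phi> ` V1, (restrict \<phi> V1, restrict \<phi> V2))) (Bij (V1 \<union> V2) B)
          (SIGMA B1:{B1. B1 \<subseteq> B \<and> card B1 = card V1}. Bij V1 B1 \<times> Bij V2 (B - B1))"
proof (rule bij_betw_byWitness[where f'="\<lambda>(B1,(\<phi>1,\<phi>2)). (\<lambda>v. if v \<in> V1 then \<phi>1 v else \<phi>2 v)"])
  show "\<forall>a\<in>Bij (V1 \<union> V2) B. (case (a ` V1, restrict a V1, restrict a V2) of (B1, \<phi>1, \<phi>2) \<Rightarrow> (\<lambda>v. if v \<in> V1 then \<phi>1 v else \<phi>2 v)) = a"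
    by (auto simp: Bij_def fun_eq_iff PiE_def extensional_def)
  show "\<forall>a'\<in>SIGMA B1:{B1. B1 \<subseteq> B \<and> card B1 = card V1}. Bij V1 B1 \<times> Bij V2 (B - B1).
       (\<lambda>\<phi>. (\<phi> ` V1, restrict \<phi> V1, restrict \<phi> V2)) (case a' of (B1, \<phi>1, \<phi>2) \<Rightarrow> (\<lambda>v. if v \<in> V1 then \<phi>1 v else \<phi>2 v)) = a'"
  proof
    fix a' assume a': "a' \<in> (SIGMA B1:{B1. B1 \<subseteq> B \<and> card B1 = card V1}. Bij V1 B1 \<times> Bij V2 (B - B1))"
    obtain B1 \<phi>1 \<phi>2 where eq: "a' = (B1,\<phi>1,\<phi>2)" by (cases a') auto
    have p1: "\<phi>1 \<in> Bij V1 B1" and p2: "\<phi>2 \<in> Bij V2 (B - B1)" using a' eq by auto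
    have "(\<lambda>v. if v \<in> V1 then \<phi>1 v else \<phi>2 v) ` V1 = \<phi>1 ` V1" by auto
    also have "\<dots> = B1" using p1 by (auto simp: Bij_def bij_betw_def)
    finally have i: "(\<lambda>v. if v \<in> V1 then \<phi>1 v else \<phi>2 v) ` V1 = B1" .
    have r1: "restrict (\<lambda>v. if v \<in> V1 then \<phi>1 v else \<phi>2 v) V1 = \<phi>1"
      using p1 by (auto simp: Bij_def fun_eq_iff PiE_def extensional_def)
    have r2: "restrict (\<lambda>v. if v \<in> V1 then \<phi>1 v else \<phi>2 v) V2 = \<phi>2"
      using p2 assms(1) by (auto simp: Bij_def fun_eq_iff PiE_def extensional_def)
    show "(\<lambda>\<phi>. (\<phi> ` V1, restrict \<phi> V1, restrict \<phi> V2)) (case a' of (B1, \<phi>1, \<phi>2) \<Rightarrow> (\<lambda>v. if v \<in> V1 then \<phi>1 v else \<phi>2 v)) = a'"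
      unfolding eq using i r1 r2 by simp
  qed
  show "(\<lambda>\<phi>. (\<phi> ` V1, restrict \<phi> V1, restrict \<phi> V2)) ` Bij (V1 \<union> V2) B
    \<subseteq> (SIGMA B1:{B1. B1 \<subseteq> B \<and> card B1 = card V1}. Bij V1 B1 \<times> Bij V2 (B - B1))"
  proof (rule image_subsetI)
    fix \<phi> assume p: "\<phi> \<in> Bij (V1 \<union> V2) B"
    then have bj: "bij_betw \<phi> (V1 \<union> V2) B" by (auto simp: Bij_def)
    then have 1: "\<phi> ` V1 \<subseteq> B" by (auto simp: bij_betw_def)
    have b1: "bij_betw \<phi> V1 (\<phi> ` V1)" using bj by (auto simp: bij_betw_def inj_on_def)
    then have 2: "card (\<phi> ` V1) = card V1" by (metis bij_betw_same_card)
    have 3: "restrict \<phi> V1 \<in> Bij V1 (\<phi> ` V1)" using b1 by (auto simp: Bij_def bij_betw_def inj_on_def)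
    have "bij_betw \<phi> V2 (B - \<phi> ` V1)" using bj assms(1) by (auto simp: bij_betw_def inj_on_def image_iff)
    then have 4: "restrict \<phi> V2 \<in> Bij V2 (B - \<phi> ` V1)" by (auto simp: Bij_def bij_betw_def inj_on_def)
    show "(\<phi> ` V1, restrict \<phi> V1, restrict \<phi> V2) \<in> (SIGMA B1:{B1. B1 \<subseteq> B \<and> card B1 = card V1}. Bij V1 B1 \<times> Bij V2 (B - B1))"
      using 1 2 3 4 by auto
  qed
  show "(\<lambda>(B1, \<phi>1, \<phi>2). \<lambda>v. if v \<in> V1 then \<phi>1 v else \<phi>2 v) ` (SIGMA B1:{B1. B1 \<subseteq> B \<and> card B1 = card V1}. Bij V1 B1 \<times> Bij V2 (B - B1))
    \<subseteq> Bij (V1 \<union> V2) B"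
  proof safe
    fix B1 \<phi>1 \<phi>2 assume B1: "B1 \<subseteq> B" and p1: "\<phi>1 \<in> Bij V1 B1" and p2: "\<phi>2 \<in> Bij V2 (B - B1)"
    let ?f = "\<lambda>v. if v \<in> V1 then \<phi>1 v else \<phi>2 v"
    have "bij_betw ?f V1 B1" using p1 by (auto simp: Bij_def bij_betw_def inj_on_def)
    moreover have "bij_betw ?f V2 (B - B1)"
    proof -
      have "bij_betw \<phi>2 V2 (B - B1)" using p2 by (auto simp: Bij_def)
      then show ?thesis using assms(1) by (subst bij_betw_cong[where g=\<phi>2]) auto
    qed
    ultimately have "bij_betw ?f (V1 \<union> V2) (B1 \<union> (B - B1))" by (rule bij_betw_combine) auto
    moreover have "B1 \<union> (B - B1) = B" using B1 by auto
    ultimately show "?f \<in> Bij (V1 \<union> V2) B"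
      using p1 p2 by (auto simp: Bij_def bij_betw_def PiE_def extensional_def)
  qed
qed

lemma sum_Bij_split:
  assumes "V1 \<inter> V2 = {}" "finite V1" "finite V2" "finite B"
  shows "(\<Sum>\<phi>\<in>Bij (V1 \<union> V2) B. f (restrict \<phi> V1) (restrict \<phi> V2)) =
     (\<Sum>B1\<in>{B1. B1 \<subseteq> B \<and> card B1 = card V1}. (\<Sum>\<phi>1\<in>Bij V1 B1. \<Sum>\<phi>2\<in>Bij V2 (B - B1). f \<phi>1 \<phi>2))"
proof -
  have fin: "finite {B1. B1 \<subseteq> B \<and> card B1 = card V1}" using assms(4) by auto
  have "(\<Sum>B1\<in>{B1. B1 \<subseteq> B \<and> card B1 = card V1}. (\<Sum>\<phi>1\<in>Bij V1 B1. \<Sum>\<phi>2\<in>Bij V2 (B - B1). f \<phi>1 \<phi>2))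
    = (\<Sum>B1\<in>{B1. B1 \<subseteq> B \<and> card B1 = card V1}. (\<Sum>(\<phi>1,\<phi>2)\<in>Bij V1 B1 \<times> Bij V2 (B - B1). f \<phi>1 \<phi>2))"
    by (simp add: sum.cartesian_product)
  also have "\<dots> = (\<Sum>(B1,(\<phi>1,\<phi>2))\<in>(SIGMA B1:{B1. B1 \<subseteq> B \<and> card B1 = card V1}. Bij V1 B1 \<times> Bij V2 (B - B1)). f \<phi>1 \<phi>2)"
    using assms fin by (subst sum.Sigma) (auto intro!: finite_Bij finite_cartesian_product dest: finite_subset simp: split_def)
  also have "\<dots> = (\<Sum>\<phi>\<in>Bij (V1 \<union> V2) B. (\<lambda>(B1,(\<phi>1,\<phi>2)). f \<phi>1 \<phi>2) (\<phi> ` V1, (restrict \<phi> V1, restrict \<phi> V2)))"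
    by (rule sum.reindex_bij_betw[OF Bij_split_bij[OF assms(1,2)], symmetric])
  finally show ?thesis by simp
qed


lemma pf_scalar:
  fixes b e z q :: rat
  assumes "b \<noteq> z" "b \<noteq> e" "e \<noteq> z"
  shows "b/(b-z)*(e/(e-b)*q) = e/(e-z)*(b/(b-z)*q) - e/(e-z)*(b/(b-e)*q)"
proof -
  have ne: "b - z \<noteq> 0" "b - e \<noteq> 0" "e - z \<noteq> 0" "e - b \<noteq> 0" using assms by auto
  have "e - b = -(b - e)" by simp
  then show ?thesis using ne
    by (simp add: divide_simps) (simp add: algebra_simps)
qed
lemma pf_identity:
  fixes B :: "rat set"
  assumes "finite B" "B \<noteq> {}"
  shows "z \<notin> B \<Longrightarrow> (\<Sum>b\<in>B. b/(b-z) * (\<Prod>b'\<in>B-{b}. b'/(b'-b))) = (\<Prod>b\<in>B. b/(b-z))"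
  using assms
proof (induction B arbitrary: z rule: finite_ne_induct)
  case (singleton x)
  then show ?case by simp
next
  case (insert e F)
  define Q where "Q b = (\<Prod>b'\<in>F-{b}. b'/(b'-b))" for b
  have key: "b/(b-z) * (\<Prod>b'\<in>insert e F-{b}. b'/(b'-b)) =
      e/(e-z) * (b/(b-z) * Q b) - e/(e-z) * (b/(b-e) * Q b)" if b: "b \<in> F" for b
  proof -
    have "insert e F - {b} = insert e (F - {b})" using b insert by auto
    then have P: "(\<Prod>b'\<in>insert e F-{b}. b'/(b'-b)) = e/(e-b) * Q b"
      unfolding Q_def using insert by simp
    show ?thesis unfolding P using b insert by (intro pf_scalar) auto
  qed
  have "(\<Sum>b\<in>insert e F. b/(b-z) * (\<Prod>b'\<in>insert e F-{b}. b'/(b'-b)))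
     = e/(e-z) * (\<Prod>b'\<in>F. b'/(b'-e)) + (\<Sum>b\<in>F. b/(b-z) * (\<Prod>b'\<in>insert e F-{b}. b'/(b'-b)))"
    using insert by (simp add: insert_Diff_if)
  also have "(\<Sum>b\<in>F. b/(b-z) * (\<Prod>b'\<in>insert e F-{b}. b'/(b'-b)))
      = e/(e-z) * (\<Sum>b\<in>F. b/(b-z) * Q b) - e/(e-z) * (\<Sum>b\<in>F. b/(b-e) * Q b)"
  proof -
    have "(\<Sum>b\<in>F. b/(b-z) * (\<Prod>b'\<in>insert e F-{b}. b'/(b'-b)))
      = (\<Sum>b\<in>F. e/(e-z) * (b/(b-z) * Q b) - e/(e-z) * (b/(b-e) * Q b))"
      by (rule sum.cong) (simp_all only: key)
    then show ?thesis by (simp only: sum_subtractf sum_distrib_left)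
  qed
  also have "(\<Sum>b\<in>F. b/(b-z) * Q b) = (\<Prod>b\<in>F. b/(b-z))"
    unfolding Q_def using insert by (intro insert.IH) auto
  also have "(\<Sum>b\<in>F. b/(b-e) * Q b) = (\<Prod>b\<in>F. b/(b-e))"
    unfolding Q_def using insert by (intro insert.IH) auto
  finally show ?case using insert by (simp add: algebra_simps)
qed

lemma pf_one:
  fixes B :: "rat set"
  assumes "finite B" "B \<noteq> {}"
  shows "(\<Sum>b\<in>B. (\<Prod>b'\<in>B-{b}. b'/(b'-b))) = 1"
proof (cases "0 \<in> B")
  case False
  have "(\<Sum>b\<in>B. (\<Prod>b'\<in>B-{b}. b'/(b'-b))) = (\<Sum>b\<in>B. b/(b-0) * (\<Prod>b'\<in>B-{b}. b'/(b'-b)))"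
    using False by (intro sum.cong) auto
  also have "\<dots> = (\<Prod>b\<in>B. b/(b-0))" using pf_identity[OF assms False] .
  also have "\<dots> = 1" using False by (intro prod.neutral) auto
  finally show ?thesis .
next
  case True
  have "(\<Sum>b\<in>B. (\<Prod>b'\<in>B-{b}. b'/(b'-b))) = (\<Prod>b'\<in>B-{0}. b'/(b'-0)) + (\<Sum>b\<in>B-{0}. (\<Prod>b'\<in>B-{b}. b'/(b'-b)))"
    using True assms by (simp add: sum.remove)
  also have "(\<Sum>b\<in>B-{0}. (\<Prod>b'\<in>B-{b}. b'/(b'-b))) = 0"
  proof (intro sum.neutral ballI)
    fix b assume "b \<in> B - {0}"
    then show "(\<Prod>b'\<in>B-{b}. b'/(b'-b)) = 0" using True assms by (intro prod_zero) auto
  qed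
  also have "(\<Prod>b'\<in>B-{0}. b'/(b'-0)) = 1" by (intro prod.neutral) auto
  finally show ?thesis by simp
qed


inductive rf :: "'a set \<Rightarrow> ('a \<times> 'a) set \<Rightarrow> 'a set \<Rightarrow> bool" where
  rf_empty: "rf {} {} {}"
| rf_union: "rf V1 P1 R1 \<Longrightarrow> rf V2 P2 R2 \<Longrightarrow> V1 \<inter> V2 = {} \<Longrightarrow> rf (V1 \<union> V2) (P1 \<union> P2) (R1 \<union> R2)"
| rf_top: "rf V P R \<Longrightarrow> x \<notin> V \<Longrightarrow> rf (insert x V) (P \<union> R \<times> {x}) {x}"

lemma rf_props: "rf V P R \<Longrightarrow> finite V \<and> P \<subseteq> V \<times> V \<and> R \<subseteq> V"
  by (induction rule: rf.induct) auto

definition wt :: "'a set \<Rightarrow> ('a \<times> 'a) set \<Rightarrow> 'a set \<Rightarrow> rat \<Rightarrow> ('a \<Rightarrow> rat) \<Rightarrow> rat" where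
  "wt V P R c \<phi> = (\<Prod>v\<in>V. \<phi> v) / ((\<Prod>(u,w)\<in>P. \<phi> u - \<phi> w) * (\<Prod>f\<in>R. \<phi> f - c))"

lemma wt_cong:
  assumes "P \<subseteq> V \<times> V" "R \<subseteq> V" "\<And>v. v \<in> V \<Longrightarrow> \<phi> v = \<psi> v"
  shows "wt V P R c \<phi> = wt V P R c \<psi>"
proof -
  have "(\<Prod>v\<in>V. \<phi> v) = (\<Prod>v\<in>V. \<psi> v)" using assms by (intro prod.cong) auto
  moreover have "(\<Prod>(u,w)\<in>P. \<phi> u - \<phi> w) = (\<Prod>(u,w)\<in>P. \<psi> u - \<psi> w)"
    using assms by (intro prod.cong) auto
  moreover have "(\<Prod>f\<in>R. \<phi> f - c) = (\<Prod>f\<in>R. \<psi> f - c)" using assms by (intro prod.cong) auto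
  ultimately show ?thesis unfolding wt_def by simp
qed

lemma div_split: "(a1*a2)/((p1*p2)*(r1*r2)) = a1/(p1*r1) * (a2/(p2*r2::'a::field))"
  by (simp add: times_divide_times_eq ac_simps)

lemma forest_formula:
  "rf V P R \<Longrightarrow> \<exists>C::nat. C > 0 \<and> (\<forall>B c. finite B \<and> card B = card V \<and> c \<notin> B \<longrightarrow>
      (\<Sum>\<phi>\<in>Bij V B. wt V P R c \<phi>) = of_nat C * (\<Prod>b\<in>B. b/(b-c)))"
proof (induction rule: rf.induct)
  case rf_empty
  show ?case
  proof (intro exI[of _ 1] conjI allI impI)
    fix B :: "rat set" and c assume "finite B \<and> card B = card ({}::'a set) \<and> c \<notin> B"
    then have "B = {}" by auto
    then show "(\<Sum>\<phi>\<in>Bij {} B. wt {} {} {} c \<phi>) = of_nat 1 * (\<Prod>b\<in>B. b/(b-c))"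
      by (simp add: Bij_def wt_def bij_betw_def)
  qed simp
next
  case (rf_union V1 P1 R1 V2 P2 R2)
  obtain C1 where C1: "C1 > 0" "\<forall>B c. finite B \<and> card B = card V1 \<and> c \<notin> B \<longrightarrow>
      (\<Sum>\<phi>\<in>Bij V1 B. wt V1 P1 R1 c \<phi>) = of_nat C1 * (\<Prod>b\<in>B. b/(b-c))" using rf_union.IH(1) by blast
  obtain C2 where C2: "C2 > 0" "\<forall>B c. finite B \<and> card B = card V2 \<and> c \<notin> B \<longrightarrow>
      (\<Sum>\<phi>\<in>Bij V2 B. wt V2 P2 R2 c \<phi>) = of_nat C2 * (\<Prod>b\<in>B. b/(b-c))" using rf_union.IH(2) by blast
  have p1: "finite V1" "P1 \<subseteq> V1 \<times> V1" "R1 \<subseteq> V1" using rf_props[OF rf_union.hyps(1)] by auto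
  have p2: "finite V2" "P2 \<subseteq> V2 \<times> V2" "R2 \<subseteq> V2" using rf_props[OF rf_union.hyps(2)] by auto
  have dj: "V1 \<inter> V2 = {}" by fact
  have djP: "P1 \<inter> P2 = {}" using p1 p2 dj by auto
  have djR: "R1 \<inter> R2 = {}" using p1 p2 dj by auto
  have finP: "finite P1" "finite P2" using p1 p2 by (auto intro: finite_subset)
  have finR: "finite R1" "finite R2" using p1 p2 by (auto intro: finite_subset)
  have wsplit: "wt (V1 \<union> V2) (P1 \<union> P2) (R1 \<union> R2) c \<phi> =
      wt V1 P1 R1 c (restrict \<phi> V1) * wt V2 P2 R2 c (restrict \<phi> V2)" for c \<phi>
  proof -
    have e1: "wt V1 P1 R1 c (restrict \<phi> V1) = wt V1 P1 R1 c \<phi>" using p1 by (intro wt_cong) auto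
    have e2: "wt V2 P2 R2 c (restrict \<phi> V2) = wt V2 P2 R2 c \<phi>" using p2 by (intro wt_cong) auto
    have u1: "(\<Prod>v\<in>V1 \<union> V2. \<phi> v) = (\<Prod>v\<in>V1. \<phi> v) * (\<Prod>v\<in>V2. \<phi> v)"
      using p1 p2 dj by (intro prod.union_disjoint) auto
    have u2: "(\<Prod>(u,w)\<in>P1 \<union> P2. \<phi> u - \<phi> w) = (\<Prod>(u,w)\<in>P1. \<phi> u - \<phi> w) * (\<Prod>(u,w)\<in>P2. \<phi> u - \<phi> w)"
      using finP djP by (intro prod.union_disjoint) auto
    have u3: "(\<Prod>f\<in>R1 \<union> R2. \<phi> f - c) = (\<Prod>f\<in>R1. \<phi> f - c) * (\<Prod>f\<in>R2. \<phi> f - c)"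
      using finR djR by (intro prod.union_disjoint) auto
    show ?thesis
      unfolding e1 e2 unfolding wt_def u1 u2 u3 by (rule div_split)
  qed
  let ?C = "C1 * C2 * (card V1 + card V2 choose card V1)"
  show ?case
  proof (intro exI[of _ ?C] conjI allI impI)
    show "?C > 0" using C1 C2 by simp
    fix B :: "rat set" and c assume B: "finite B \<and> card B = card (V1 \<union> V2) \<and> c \<notin> B"
    have cB: "card B = card V1 + card V2" using B p1 p2 dj by (simp add: card_Un_disjoint)
    have "(\<Sum>\<phi>\<in>Bij (V1 \<union> V2) B. wt (V1 \<union> V2) (P1 \<union> P2) (R1 \<union> R2) c \<phi>)
        = (\<Sum>\<phi>\<in>Bij (V1 \<union> V2) B. (\<lambda>\<phi>1 \<phi>2. wt V1 P1 R1 c \<phi>1 * wt V2 P2 R2 c \<phi>2) (restrict \<phi> V1) (restrict \<phi> V2))"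
      by (simp add: wsplit)
    also have "\<dots> = (\<Sum>B1\<in>{B1. B1 \<subseteq> B \<and> card B1 = card V1}.
         (\<Sum>\<phi>1\<in>Bij V1 B1. \<Sum>\<phi>2\<in>Bij V2 (B - B1). wt V1 P1 R1 c \<phi>1 * wt V2 P2 R2 c \<phi>2))"
      using sum_Bij_split[OF dj p1(1) p2(1), of B "\<lambda>\<phi>1 \<phi>2. wt V1 P1 R1 c \<phi>1 * wt V2 P2 R2 c \<phi>2"] B by simp
    also have "\<dots> = (\<Sum>B1\<in>{B1. B1 \<subseteq> B \<and> card B1 = card V1}. of_nat (C1 * C2) * (\<Prod>b\<in>B. b/(b-c)))"
    proof (rule sum.cong)
      fix B1 assume "B1 \<in> {B1. B1 \<subseteq> B \<and> card B1 = card V1}"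
      then have B1: "B1 \<subseteq> B" "card B1 = card V1" by auto
      have fB1: "finite B1" using B B1 by (auto intro: finite_subset)
      have cB2: "card (B - B1) = card V2" using B1 fB1 cB by (simp add: card_Diff_subset)
      have "(\<Sum>\<phi>1\<in>Bij V1 B1. \<Sum>\<phi>2\<in>Bij V2 (B - B1). wt V1 P1 R1 c \<phi>1 * wt V2 P2 R2 c \<phi>2)
          = (\<Sum>\<phi>1\<in>Bij V1 B1. wt V1 P1 R1 c \<phi>1) * (\<Sum>\<phi>2\<in>Bij V2 (B - B1). wt V2 P2 R2 c \<phi>2)"
        by (simp add: sum_product)
      also have "\<dots> = (of_nat C1 * (\<Prod>b\<in>B1. b/(b-c))) * (of_nat C2 * (\<Prod>b\<in>B - B1. b/(b-c)))"
        using C1(2)[rule_format, of B1 c] C2(2)[rule_format, of "B - B1" c] fB1 B1 cB2 B by auto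
      also have "\<dots> = of_nat (C1 * C2) * ((\<Prod>b\<in>B1. b/(b-c)) * (\<Prod>b\<in>B - B1. b/(b-c)))"
        by (simp add: algebra_simps)
      also have "(\<Prod>b\<in>B1. b/(b-c)) * (\<Prod>b\<in>B - B1. b/(b-c)) = (\<Prod>b\<in>B. b/(b-c))"
        using B B1 by (metis prod.subset_diff mult.commute)
      finally show "(\<Sum>\<phi>1\<in>Bij V1 B1. \<Sum>\<phi>2\<in>Bij V2 (B - B1). wt V1 P1 R1 c \<phi>1 * wt V2 P2 R2 c \<phi>2)
          = of_nat (C1 * C2) * (\<Prod>b\<in>B. b/(b-c))" .
    qed simp
    also have "\<dots> = of_nat (card {B1. B1 \<subseteq> B \<and> card B1 = card V1}) * (of_nat (C1 * C2) * (\<Prod>b\<in>B. b/(b-c)))"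
      by simp
    also have "card {B1. B1 \<subseteq> B \<and> card B1 = card V1} = card B choose card V1"
      using B n_subsets[of B "card V1"] by simp
    finally show "(\<Sum>\<phi>\<in>Bij (V1 \<union> V2) B. wt (V1 \<union> V2) (P1 \<union> P2) (R1 \<union> R2) c \<phi>) = of_nat ?C * (\<Prod>b\<in>B. b/(b-c))"
      using cB by (simp add: algebra_simps)
  qed
next
  case (rf_top V P R x)
  obtain C where C: "C > 0" "\<forall>B c. finite B \<and> card B = card V \<and> c \<notin> B \<longrightarrow>
      (\<Sum>\<phi>\<in>Bij V B. wt V P R c \<phi>) = of_nat C * (\<Prod>b\<in>B. b/(b-c))" using rf_top.IH by blast
  have p: "finite V" "P \<subseteq> V \<times> V" "R \<subseteq> V" using rf_props[OF rf_top.hyps(1)] by auto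
  have x: "x \<notin> V" by fact
  have finP: "finite P" "finite R" using p by (auto intro: finite_subset)
  have wtop: "wt (insert x V) (P \<union> R \<times> {x}) {x} c (\<psi>(x:=b)) = b/(b-c) * wt V P R b \<psi>" for c b \<psi>
  proof -
    have e1: "(\<Prod>v\<in>insert x V. (\<psi>(x:=b)) v) = b * (\<Prod>v\<in>V. \<psi> v)"
    proof -
      have e0: "(\<Prod>v\<in>V. (\<psi>(x:=b)) v) = (\<Prod>v\<in>V. \<psi> v)" using x by (intro prod.cong) auto
      show ?thesis by (simp only: prod.insert[OF p(1) x] e0 fun_upd_same)
    qed
    have djx: "P \<inter> R \<times> {x} = {}" using p x by auto
    have e2: "(\<Prod>(u,w)\<in>P \<union> R \<times> {x}. (\<psi>(x:=b)) u - (\<psi>(x:=b)) w)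
       = (\<Prod>(u,w)\<in>P. \<psi> u - \<psi> w) * (\<Prod>f\<in>R. \<psi> f - b)"
    proof -
      have "(\<Prod>(u,w)\<in>P \<union> R \<times> {x}. (\<psi>(x:=b)) u - (\<psi>(x:=b)) w)
         = (\<Prod>(u,w)\<in>P. (\<psi>(x:=b)) u - (\<psi>(x:=b)) w) * (\<Prod>(u,w)\<in>R \<times> {x}. (\<psi>(x:=b)) u - (\<psi>(x:=b)) w)"
        using finP djx by (intro prod.union_disjoint) auto
      also have "(\<Prod>(u,w)\<in>P. (\<psi>(x:=b)) u - (\<psi>(x:=b)) w) = (\<Prod>(u,w)\<in>P. \<psi> u - \<psi> w)"
        using p x by (intro prod.cong) auto
      also have "(\<Prod>(u,w)\<in>R \<times> {x}. (\<psi>(x:=b)) u - (\<psi>(x:=b)) w) = (\<Prod>u\<in>R. \<Prod>w\<in>{x}. (\<psi>(x:=b)) u - (\<psi>(x:=b)) w)"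
        by (simp only: prod.cartesian_product)
      also have "\<dots> = (\<Prod>f\<in>R. \<psi> f - b)"
        using p x by (intro prod.cong) auto
      finally show ?thesis .
    qed
    show ?thesis unfolding wt_def e1 e2 by simp
  qed
  show ?case
  proof (intro exI[of _ C] conjI allI impI)
    show "C > 0" by fact
    fix B :: "rat set" and c assume B: "finite B \<and> card B = card (insert x V) \<and> c \<notin> B"
    have cB: "card B = card V + 1" using B p x by simp
    then have Bne: "B \<noteq> {}" by auto
    have "(\<Sum>\<phi>\<in>Bij (insert x V) B. wt (insert x V) (P \<union> R \<times> {x}) {x} c \<phi>)
       = (\<Sum>b\<in>B. \<Sum>\<psi>\<in>Bij V (B - {b}). wt (insert x V) (P \<union> R \<times> {x}) {x} c (\<psi>(x:=b)))"
      using sum_Bij_insert[OF x p(1), of B "wt (insert x V) (P \<union> R \<times> {x}) {x} c"] B by simp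
    also have "\<dots> = (\<Sum>b\<in>B. b/(b-c) * (\<Sum>\<psi>\<in>Bij V (B - {b}). wt V P R b \<psi>))"
      by (simp add: wtop sum_distrib_left)
    also have "\<dots> = (\<Sum>b\<in>B. b/(b-c) * (of_nat C * (\<Prod>b'\<in>B - {b}. b'/(b'-b))))"
    proof (rule sum.cong)
      fix b assume b: "b \<in> B"
      have "(\<Sum>\<psi>\<in>Bij V (B - {b}). wt V P R b \<psi>) = of_nat C * (\<Prod>b'\<in>B - {b}. b'/(b'-b))"
        using C(2)[rule_format, of "B - {b}" b] B b cB by auto
      then show "b/(b-c) * (\<Sum>\<psi>\<in>Bij V (B - {b}). wt V P R b \<psi>) = b/(b-c) * (of_nat C * (\<Prod>b'\<in>B - {b}. b'/(b'-b)))"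
        by simp
    qed simp
    also have "\<dots> = of_nat C * (\<Sum>b\<in>B. b/(b-c) * (\<Prod>b'\<in>B - {b}. b'/(b'-b)))"
      by (simp add: sum_distrib_left algebra_simps)
    also have "(\<Sum>b\<in>B. b/(b-c) * (\<Prod>b'\<in>B - {b}. b'/(b'-b))) = (\<Prod>b\<in>B. b/(b-c))"
      by (rule pf_identity) (use B Bne in auto)
    finally show "(\<Sum>\<phi>\<in>Bij (insert x V) B. wt (insert x V) (P \<union> R \<times> {x}) {x} c \<phi>) = of_nat C * (\<Prod>b\<in>B. b/(b-c))" .
  qed
qed


lemma rf_single: "rf {l} {} {l}"
  using rf_top[OF rf_empty, of l] by simp

lemma rf_attach: "rf V P R \<Longrightarrow> p \<in> V \<Longrightarrow> l \<notin> V \<Longrightarrow> rf (insert l V) (insert (l,p) P) R"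
proof (induction rule: rf.induct)
  case rf_empty
  then show ?case by simp
next
  case (rf_union V1 P1 R1 V2 P2 R2)
  show ?case
  proof (cases "p \<in> V1")
    case True
    have "rf (insert l V1 \<union> V2) (insert (l,p) P1 \<union> P2) (R1 \<union> R2)"
      using rf_union True by (intro rf.rf_union) auto
    moreover have "insert l V1 \<union> V2 = insert l (V1 \<union> V2)" "insert (l,p) P1 \<union> P2 = insert (l,p) (P1 \<union> P2)" by auto
    ultimately show ?thesis by simp
  next
    case False
    then have "p \<in> V2" using rf_union by auto
    have "rf (V1 \<union> insert l V2) (P1 \<union> insert (l,p) P2) (R1 \<union> R2)"
      using rf_union \<open>p \<in> V2\<close> by (intro rf.rf_union) auto
    moreover have "V1 \<union> insert l V2 = insert l (V1 \<union> V2)" "P1 \<union> insert (l,p) P2 = insert (l,p) (P1 \<union> P2)" by auto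
    ultimately show ?thesis by simp
  qed
next
  case (rf_top V P R x)
  show ?case
  proof (cases "p = x")
    case True
    have "rf (V \<union> {l}) (P \<union> {}) (R \<union> {l})"
      using rf_top by (intro rf.rf_union rf_single) auto
    then have "rf (insert x (V \<union> {l})) ((P \<union> {}) \<union> (R \<union> {l}) \<times> {x}) {x}"
      using rf_top by (intro rf.rf_top) auto
    moreover have "insert x (V \<union> {l}) = insert l (insert x V)"
       "(P \<union> {}) \<union> (R \<union> {l}) \<times> {x} = insert (l,p) (P \<union> R \<times> {x})" using True by auto
    ultimately show ?thesis by simp
  next
    case False
    then have "rf (insert l V) (insert (l,p) P) R" using rf_top by auto
    then have "rf (insert x (insert l V)) (insert (l,p) P \<union> R \<times> {x}) {x}"
      using rf_top by (intro rf.rf_top) auto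
    moreover have "insert x (insert l V) = insert l (insert x V)"
       "insert (l,p) P \<union> R \<times> {x} = insert (l,p) (P \<union> R \<times> {x})" by auto
    ultimately show ?thesis by simp
  qed
qed

lemma leaf_exists:
  assumes fin: "finite V" and r: "r \<in> V" and EV: "E \<subseteq> V \<times> V" and nl: "\<forall>(a,b)\<in>E. a \<noteq> b"
    and cE: "card E = card V - 1" and conn: "\<forall>u\<in>V. \<forall>w\<in>V. (u, w) \<in> (E \<union> E\<inverse>)\<^sup>*"
    and two: "card V \<ge> 2"
  shows "\<exists>l\<in>V. l \<noteq> r \<and> (\<exists>e. {e'\<in>E. fst e' = l \<or> snd e' = l} = {e})"
proof -
  define deg where "deg v = card {e'\<in>E. fst e' = v \<or> snd e' = v}" for v
  have finE: "finite E" using fin EV by (auto intro: finite_subset)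
  have fE: "fst ` E \<subseteq> V" "snd ` E \<subseteq> V" using EV by auto
  have s1: "(\<Sum>v\<in>V. card {e'\<in>E. fst e' = v}) = card E"
    using sum.group[of E V fst "\<lambda>_. (1::nat)"] finE fin fE by simp
  have s2: "(\<Sum>v\<in>V. card {e'\<in>E. snd e' = v}) = card E"
    using sum.group[of E V snd "\<lambda>_. (1::nat)"] finE fin fE by simp
  have dsplit: "deg v = card {e'\<in>E. fst e' = v} + card {e'\<in>E. snd e' = v}" for v
  proof -
    have "{e'\<in>E. fst e' = v \<or> snd e' = v} = {e'\<in>E. fst e' = v} \<union> {e'\<in>E. snd e' = v}" by auto
    moreover have "{e'\<in>E. fst e' = v} \<inter> {e'\<in>E. snd e' = v} = {}" using nl by auto
    ultimately show ?thesis unfolding deg_def using finE by (simp add: card_Un_disjoint)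
  qed
  have sumdeg: "(\<Sum>v\<in>V. deg v) = 2 * card E"
    using s1 s2 by (simp add: dsplit sum.distrib)
  have pos: "deg v \<ge> 1" if v: "v \<in> V" for v
  proof -
    obtain w where w: "w \<in> V" "w \<noteq> v"
    proof -
      have "\<not> V \<subseteq> {v}"
      proof
        assume "V \<subseteq> {v}"
        then have "card V \<le> card {v}" by (intro card_mono) auto
        then show False using two by simp
      qed
      then show ?thesis using that by blast
    qed
    have "(v, w) \<in> (E \<union> E\<inverse>)\<^sup>*" using conn v w by auto
    then obtain y where "(v, y) \<in> E \<union> E\<inverse>" using w(2) by (cases rule: converse_rtranclE) auto
    then have "{e'\<in>E. fst e' = v \<or> snd e' = v} \<noteq> {}" by auto
    moreover have "finite {e'\<in>E. fst e' = v \<or> snd e' = v}" using finE by auto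
    ultimately show ?thesis unfolding deg_def by (simp add: Suc_le_eq card_gt_0_iff)
  qed
  have "\<exists>l\<in>V - {r}. deg l < 2"
  proof (rule ccontr)
    assume "\<not> ?thesis"
    then have ge: "\<forall>v\<in>V - {r}. deg v \<ge> 2" using not_less by blast
    have "(\<Sum>v\<in>V. deg v) = deg r + (\<Sum>v\<in>V - {r}. deg v)" using fin r by (simp add: sum.remove)
    also have "(\<Sum>v\<in>V - {r}. deg v) \<ge> (\<Sum>v\<in>V - {r}. 2)" using ge by (intro sum_mono) auto
    moreover have "(\<Sum>v\<in>V - {r}. (2::nat)) = 2 * (card V - 1)" using fin r by simp
    moreover have "deg r \<ge> 1" using pos r by auto
    ultimately have "(\<Sum>v\<in>V. deg v) \<ge> 1 + 2 * (card V - 1)" by linarith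
    then show False using sumdeg cE by simp
  qed
  then obtain l where l: "l \<in> V" "l \<noteq> r" "deg l < 2" by auto
  with pos have "deg l = 1" by fastforce
  then show ?thesis using l unfolding deg_def by (auto simp: card_1_singleton_iff)
qed


lemma remove_leaf_tree:
  assumes T: "rooted_directed_tree V E r" and l: "l \<in> V" "l \<noteq> r"
    and e: "{e'\<in>E. fst e' = l \<or> snd e' = l} = {e}"
    and p_def: "p = (if fst e = l then snd e else fst e)"
  shows "rooted_directed_tree (V - {l}) (E - {e}) r" and "p \<in> V - {l}" and "e \<in> E"
    and "e = (l, p) \<or> e = (p, l)"
proof -
  have fin: "finite V" and r: "r \<in> V" and EV: "E \<subseteq> V \<times> V" and nl: "\<forall>(a,b)\<in>E. a \<noteq> b"
    and cE: "card E = card V - 1" and conn: "\<forall>u\<in>V. \<forall>w\<in>V. (u, w) \<in> (E \<union> E\<inverse>)\<^sup>*"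
    using T unfolding rooted_directed_tree_def by auto
  have finE: "finite E" using fin EV by (auto intro: finite_subset)
  have eq: "x \<in> E \<and> (fst x = l \<or> snd x = l) \<longleftrightarrow> x = e" for x
    using e[unfolded set_eq_iff, rule_format, of x] by simp
  show eE: "e \<in> E" using eq by blast
  have el: "fst e = l \<or> snd e = l" using eq by blast
  show ep: "e = (l, p) \<or> e = (p, l)" using el p_def by (cases e) auto
  have pl: "p \<noteq> l" using ep eE nl by auto
  have pV: "p \<in> V" using ep eE EV by auto
  show "p \<in> V - {l}" using pV pl by auto
  have H1: "(a, b) \<in> E \<Longrightarrow> a = l \<or> b = l \<Longrightarrow> (a, b) = e" for a b using eq[of "(a,b)"] by simp
  let ?U = "E \<union> E\<inverse>" and ?U' = "(E - {e}) \<union> (E - {e})\<inverse>"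
  have conn': "(u, w) \<in> ?U'\<^sup>*" if u: "u \<in> V - {l}" and w: "w \<in> V - {l}" for u w
  proof -
    have "(u, w) \<in> ?U\<^sup>*" using conn u w by auto
    then have "(w \<noteq> l \<longrightarrow> (u, w) \<in> ?U'\<^sup>*) \<and> (w = l \<longrightarrow> (u, p) \<in> ?U'\<^sup>*)"
    proof (induction rule: rtrancl_induct)
      case base
      then show ?case using u by auto
    next
      case (step y z)
      have yz: "(y, z) \<in> E \<or> (z, y) \<in> E" using step.hyps(2) by auto
      show ?case
      proof (cases "z = l")
        case True
        show ?thesis
        proof (cases "y = l")
          case True
          then show ?thesis using step.IH \<open>z = l\<close> by auto
        next
          case False
          have "(y, l) = e \<or> (l, y) = e" using yz H1 \<open>z = l\<close> by blast
          then have "y = p" using ep pl False by auto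
          then show ?thesis using step.IH False \<open>z = l\<close> by auto
        qed
      next
        case False
        show ?thesis
        proof (cases "y = l")
          case True
          have "(l, z) = e \<or> (z, l) = e" using yz H1 \<open>y = l\<close> by blast
          then have "z = p" using ep pl False by auto
          then show ?thesis using step.IH True False by auto
        next
          case yl: False
          have "(y, z) \<noteq> e" "(z, y) \<noteq> e" using el yl False by auto
          then have "(y, z) \<in> ?U'" using yz by auto
          then show ?thesis using step.IH yl False by (auto intro: rtrancl_into_rtrancl)
        qed
      qed
    qed
    then show ?thesis using w by auto
  qed
  have E'V: "E - {e} \<subseteq> (V - {l}) \<times> (V - {l})"
  proof
    fix x assume x: "x \<in> E - {e}"
    then have "fst x \<noteq> l" "snd x \<noteq> l" using eq[of x] by auto
    then show "x \<in> (V - {l}) \<times> (V - {l})" using x EV by (cases x) auto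
  qed
  have "card (E - {e}) = card (V - {l}) - 1" using cE eE finE fin l by simp
  moreover have "\<forall>(a,b)\<in>E - {e}. a \<noteq> b" using nl by auto
  moreover have "\<forall>u\<in>V - {l}. \<forall>w\<in>V - {l}. (u, w) \<in> ?U'\<^sup>*" using conn' by blast
  moreover have "finite (V - {l})" "r \<in> V - {l}" using fin r l(2) by auto
  ultimately show "rooted_directed_tree (V - {l}) (E - {e}) r"
    unfolding rooted_directed_tree_def using E'V by blast
qed

lemma tree_struct_n:
  "\<forall>V E. card V = n \<longrightarrow> rooted_directed_tree V E r \<longrightarrow>
    (\<exists>P R (s::rat). rf (V - {r}) P R \<and> (s = 1 \<or> s = -1) \<and>
      (\<forall>\<phi>::'a \<Rightarrow> rat. (\<Prod>(a,b)\<in>E. \<phi> a - \<phi> b) = s * (\<Prod>(u,w)\<in>P \<union> R \<times> {r}. \<phi> u - \<phi> w)))"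
proof (induction n)
  case 0
  show ?case
  proof (intro allI impI)
    fix V :: "'a set" and E assume "card V = 0" "rooted_directed_tree V E r"
    then show "\<exists>P R (s::rat). rf (V - {r}) P R \<and> (s = 1 \<or> s = -1) \<and>
      (\<forall>\<phi>::'a \<Rightarrow> rat. (\<Prod>(a,b)\<in>E. \<phi> a - \<phi> b) = s * (\<Prod>(u,w)\<in>P \<union> R \<times> {r}. \<phi> u - \<phi> w))"
      unfolding rooted_directed_tree_def by auto
  qed
next
  case (Suc n)
  show ?case
  proof (intro allI impI)
    fix V :: "'a set" and E assume cV: "card V = Suc n" and T: "rooted_directed_tree V E r"
    have fin: "finite V" and r: "r \<in> V" and EV: "E \<subseteq> V \<times> V" and nl: "\<forall>(a,b)\<in>E. a \<noteq> b"
      and cE: "card E = card V - 1" and conn: "\<forall>u\<in>V. \<forall>w\<in>V. (u, w) \<in> (E \<union> E\<inverse>)\<^sup>*"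
      using T unfolding rooted_directed_tree_def by auto
    have finE: "finite E" using fin EV by (auto intro: finite_subset)
    show "\<exists>P R (s::rat). rf (V - {r}) P R \<and> (s = 1 \<or> s = -1) \<and>
      (\<forall>\<phi>::'a \<Rightarrow> rat. (\<Prod>(a,b)\<in>E. \<phi> a - \<phi> b) = s * (\<Prod>(u,w)\<in>P \<union> R \<times> {r}. \<phi> u - \<phi> w))"
    proof (cases "n = 0")
      case True
      then have "V = {r}" using cV r fin by (metis One_nat_def card_1_singletonE singletonD)
      then have "E = {}" using EV nl by auto
      then show ?thesis using \<open>V = {r}\<close> by (intro exI[of _ "{}"] exI[of _ "{}"] exI[of _ 1]) (auto intro: rf_empty)
    next
      case False
      then have two: "card V \<ge> 2" using cV by simp
      obtain l e where l: "l \<in> V" "l \<noteq> r" and e: "{e'\<in>E. fst e' = l \<or> snd e' = l} = {e}"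
        using leaf_exists[OF fin r EV nl cE conn two] by blast
      define p where "p = (if fst e = l then snd e else fst e)"
      note rl = remove_leaf_tree[OF T l e p_def]
      have cV': "card (V - {l}) = n" using cV l fin by simp
      obtain P R s where IH: "rf (V - {l} - {r}) P R" "s = 1 \<or> s = -1"
        "\<forall>\<phi>::'a \<Rightarrow> rat. (\<Prod>(a,b)\<in>E - {e}. \<phi> a - \<phi> b) = s * (\<Prod>(u,w)\<in>P \<union> R \<times> {r}. \<phi> u - \<phi> w)"
        using Suc.IH cV' rl(1) by blast
      have props: "P \<subseteq> (V - {l} - {r}) \<times> (V - {l} - {r})" "R \<subseteq> V - {l} - {r}" "finite (V - {l} - {r})"
        using rf_props[OF IH(1)] by auto
      define Old where "Old = P \<union> R \<times> {r}"
      have finOld: "finite Old" unfolding Old_def using props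
        by (auto intro: finite_subset[of _ "(V - {l} - {r}) \<times> (V - {l} - {r})"] finite_subset[of _ "V - {l} - {r}"])
      have lOld: "(l, p) \<notin> Old" unfolding Old_def using props by auto
      obtain P2 R2 where new: "rf (V - {r}) P2 R2" "P2 \<union> R2 \<times> {r} = insert (l, p) Old"
      proof (cases "p = r")
        case True
        have "rf ((V - {l} - {r}) \<union> {l}) (P \<union> {}) (R \<union> {l})"
          using IH(1) by (intro rf_union rf_single) auto
        moreover have "(V - {l} - {r}) \<union> {l} = V - {r}" using l by auto
        moreover have "P \<union> (R \<union> {l}) \<times> {r} = insert (l, p) Old" unfolding Old_def using True by auto
        ultimately show ?thesis using that by auto
      next
        case False
        have "rf (insert l (V - {l} - {r})) (insert (l,p) P) R"
          using rl(2) False l by (intro rf_attach[OF IH(1)]) auto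
        moreover have "insert l (V - {l} - {r}) = V - {r}" using l by auto
        moreover have "insert (l,p) P \<union> R \<times> {r} = insert (l, p) Old" unfolding Old_def by auto
        ultimately show ?thesis using that by auto
      qed
      define t :: rat where "t = (if e = (l, p) then 1 else -1)"
      show ?thesis
      proof (intro exI[of _ P2] exI[of _ R2] exI[of _ "t * s"] conjI allI)
        show "rf (V - {r}) P2 R2" by fact
        show "t * s = 1 \<or> t * s = -1" using IH(2) unfolding t_def by auto
        fix \<phi> :: "'a \<Rightarrow> rat"
        have "E = insert e (E - {e})" using rl(3) by auto
        then have "(\<Prod>(a,b)\<in>E. \<phi> a - \<phi> b) = (case e of (a,b) \<Rightarrow> \<phi> a - \<phi> b) * (\<Prod>(a,b)\<in>E - {e}. \<phi> a - \<phi> b)"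
          using finE by (metis (no_types, lifting) Diff_iff finite_Diff insertI1 prod.insert)
        also have "(case e of (a,b) \<Rightarrow> \<phi> a - \<phi> b) = t * (\<phi> l - \<phi> p)"
          using rl(4) unfolding t_def by auto
        also have "(\<Prod>(a,b)\<in>E - {e}. \<phi> a - \<phi> b) = s * (\<Prod>(u,w)\<in>Old. \<phi> u - \<phi> w)"
          using IH(3) unfolding Old_def by blast
        finally have "(\<Prod>(a,b)\<in>E. \<phi> a - \<phi> b) = t * s * ((\<phi> l - \<phi> p) * (\<Prod>(u,w)\<in>Old. \<phi> u - \<phi> w))"
          by (simp add: algebra_simps)
        also have "(\<phi> l - \<phi> p) * (\<Prod>(u,w)\<in>Old. \<phi> u - \<phi> w) = (\<Prod>(u,w)\<in>insert (l,p) Old. \<phi> u - \<phi> w)"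
          using finOld lOld by simp
        finally show "(\<Prod>(a,b)\<in>E. \<phi> a - \<phi> b) = t * s * (\<Prod>(u,w)\<in>P2 \<union> R2 \<times> {r}. \<phi> u - \<phi> w)"
          using new(2) by simp
      qed
    qed
  qed
qed

lemma Bij_compose:
  assumes inj: "inj_on x A"
  shows "bij_betw (\<lambda>\<sigma>. restrict (x \<circ> \<sigma>) V) (Bij V A) (Bij V (x ` A))"
proof (rule bij_betw_byWitness[where f'="\<lambda>\<phi>. restrict (the_inv_into A x \<circ> \<phi>) V"])
  show "\<forall>a\<in>Bij V A. restrict (the_inv_into A x \<circ> restrict (x \<circ> a) V) V = a"
  proof
    fix \<sigma> assume s: "\<sigma> \<in> Bij V A"
    show "restrict (the_inv_into A x \<circ> restrict (x \<circ> \<sigma>) V) V = \<sigma>"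
    proof
      fix v show "restrict (the_inv_into A x \<circ> restrict (x \<circ> \<sigma>) V) V v = \<sigma> v"
        using s the_inv_into_f_f[OF inj] by (cases "v \<in> V") (auto simp: Bij_def PiE_def extensional_def)
    qed
  qed
  show "\<forall>a'\<in>Bij V (x ` A). restrict (x \<circ> restrict (the_inv_into A x \<circ> a') V) V = a'"
  proof
    fix \<phi> assume s: "\<phi> \<in> Bij V (x ` A)"
    show "restrict (x \<circ> restrict (the_inv_into A x \<circ> \<phi>) V) V = \<phi>"
    proof
      fix v show "restrict (x \<circ> restrict (the_inv_into A x \<circ> \<phi>) V) V v = \<phi> v"
        using s f_the_inv_into_f[OF inj] by (cases "v \<in> V") (auto simp: Bij_def PiE_def extensional_def Pi_iff)
    qed
  qed
  show "(\<lambda>\<sigma>. restrict (x \<circ> \<sigma>) V) ` Bij V A \<subseteq> Bij V (x ` A)"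
  proof (rule image_subsetI)
    fix \<sigma> assume s: "\<sigma> \<in> Bij V A"
    then have "bij_betw (x \<circ> \<sigma>) V (x ` A)"
      using inj by (intro bij_betw_trans[of \<sigma> V A x]) (auto simp: Bij_def inj_on_imp_bij_betw)
    then have "bij_betw (restrict (x \<circ> \<sigma>) V) V (x ` A)"
      by (subst bij_betw_cong[where g="x \<circ> \<sigma>"]) auto
    then show "restrict (x \<circ> \<sigma>) V \<in> Bij V (x ` A)"
      by (auto simp: Bij_def bij_betw_def)
  qed
  show "(\<lambda>\<phi>. restrict (the_inv_into A x \<circ> \<phi>) V) ` Bij V (x ` A) \<subseteq> Bij V A"
  proof (rule image_subsetI)
    fix \<phi> assume s: "\<phi> \<in> Bij V (x ` A)"
    have bi: "bij_betw (the_inv_into A x) (x ` A) A"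
      using inj by (intro bij_betw_the_inv_into) (simp add: inj_on_imp_bij_betw)
    then have "bij_betw (the_inv_into A x \<circ> \<phi>) V A"
      using s by (intro bij_betw_trans[of \<phi> V "x ` A"]) (auto simp: Bij_def)
    then have "bij_betw (restrict (the_inv_into A x \<circ> \<phi>) V) V A"
      by (subst bij_betw_cong[where g="the_inv_into A x \<circ> \<phi>"]) auto
    then show "restrict (the_inv_into A x \<circ> \<phi>) V \<in> Bij V A"
      by (auto simp: Bij_def bij_betw_def)
  qed
qed

theorem mainTheorem7:
  fixes V :: "'a set" and E :: "('a \<times> 'a) set" and r :: 'a
  assumes "rooted_directed_tree V E r"
    and "card V \<ge> 1"
  shows "\<exists>c::int. c \<noteq> 0 \<and>
           (\<forall>x :: nat \<Rightarrow> rat. inj_on x {1..card V} \<longrightarrow> tree_bracket_at V E r x = of_int c)"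
proof -
  have T: "rooted_directed_tree V E r" by fact
  have fin: "finite V" and r: "r \<in> V" and EV: "E \<subseteq> V \<times> V"
    using T unfolding rooted_directed_tree_def by auto
  obtain P R s where PR: "rf (V - {r}) P R" and s: "s = 1 \<or> s = (-1::rat)"
    and sg: "\<forall>\<phi>::'a \<Rightarrow> rat. (\<Prod>(a,b)\<in>E. \<phi> a - \<phi> b) = s * (\<Prod>(u,w)\<in>P \<union> R \<times> {r}. \<phi> u - \<phi> w)"
    using tree_struct_n[of "card V" r] T by blast
  obtain C where C: "C > 0" "\<forall>B c. finite B \<and> card B = card (V - {r}) \<and> c \<notin> B \<longrightarrow>
      (\<Sum>\<phi>\<in>Bij (V - {r}) B. wt (V - {r}) P R c \<phi>) = of_nat C * (\<Prod>b\<in>B. b/(b-c))"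
    using forest_formula[OF PR] by blast
  have props: "finite (V - {r})" "P \<subseteq> (V - {r}) \<times> (V - {r})" "R \<subseteq> V - {r}"
    using rf_props[OF PR] by auto
  have finP: "finite P" "finite R" using props by (auto intro: finite_subset)
  have s2: "s * s = 1" using s by auto
  define c :: int where "c = (if s = 1 then int C else - int C)"
  have cs: "of_int c = s * of_nat C" using s unfolding c_def by auto
  show ?thesis
  proof (intro exI[of _ c] conjI allI impI)
    show "c \<noteq> 0" using C(1) unfolding c_def by auto
    fix x :: "nat \<Rightarrow> rat" assume inj: "inj_on x {1..card V}"
    define B where "B = x ` {1..card V}"
    have finB: "finite B" and cB: "card B = card V" unfolding B_def using inj by (auto simp: card_image)
    have Bne: "B \<noteq> {}" using cB assms(2) by auto
    define G where "G \<phi> = (\<Prod>v\<in>V - {r}. \<phi> v) / (\<Prod>(a,b)\<in>E. \<phi> a - \<phi> b)" for \<phi> :: "'a \<Rightarrow> rat"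
    have "tree_bracket_at V E r x = (\<Sum>\<sigma>\<in>Bij V {1..card V}. G (x \<circ> \<sigma>))"
      unfolding tree_bracket_at_def labelings_def Bij_def G_def by simp
    also have "\<dots> = (\<Sum>\<sigma>\<in>Bij V {1..card V}. G (restrict (x \<circ> \<sigma>) V))"
    proof (rule sum.cong)
      fix \<sigma> show "G (x \<circ> \<sigma>) = G (restrict (x \<circ> \<sigma>) V)"
      proof -
        have "(\<Prod>v\<in>V - {r}. (x \<circ> \<sigma>) v) = (\<Prod>v\<in>V - {r}. (restrict (x \<circ> \<sigma>) V) v)" by (intro prod.cong) auto
        moreover have "(\<Prod>(a,b)\<in>E. (x \<circ> \<sigma>) a - (x \<circ> \<sigma>) b) = (\<Prod>(a,b)\<in>E. (restrict (x \<circ> \<sigma>) V) a - (restrict (x \<circ> \<sigma>) V) b)"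
          using EV by (intro prod.cong) auto
        ultimately show ?thesis unfolding G_def by simp
      qed
    qed simp
    also have "\<dots> = (\<Sum>\<phi>\<in>Bij V B. G \<phi>)"
      unfolding B_def by (rule sum.reindex_bij_betw[OF Bij_compose[OF inj]])
    also have "\<dots> = (\<Sum>\<phi>\<in>Bij V B. s * ((\<Prod>v\<in>V - {r}. \<phi> v) / (\<Prod>(u,w)\<in>P \<union> R \<times> {r}. \<phi> u - \<phi> w)))"
    proof (rule sum.cong)
      fix \<phi> :: "'a \<Rightarrow> rat"
      have "G \<phi> = (\<Prod>v\<in>V - {r}. \<phi> v) / (s * (\<Prod>(u,w)\<in>P \<union> R \<times> {r}. \<phi> u - \<phi> w))"
        unfolding G_def using sg by simp
      also have "\<dots> = s * ((\<Prod>v\<in>V - {r}. \<phi> v) / (\<Prod>(u,w)\<in>P \<union> R \<times> {r}. \<phi> u - \<phi> w))"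
        using s by auto
      finally show "G \<phi> = s * ((\<Prod>v\<in>V - {r}. \<phi> v) / (\<Prod>(u,w)\<in>P \<union> R \<times> {r}. \<phi> u - \<phi> w))" .
    qed simp
    also have "\<dots> = s * (\<Sum>\<phi>\<in>Bij (insert r (V - {r})) B. (\<Prod>v\<in>V - {r}. \<phi> v) / (\<Prod>(u,w)\<in>P \<union> R \<times> {r}. \<phi> u - \<phi> w))"
      using r by (simp add: sum_distrib_left insert_absorb)
    also have "(\<Sum>\<phi>\<in>Bij (insert r (V - {r})) B. (\<Prod>v\<in>V - {r}. \<phi> v) / (\<Prod>(u,w)\<in>P \<union> R \<times> {r}. \<phi> u - \<phi> w))
        = (\<Sum>b\<in>B. \<Sum>\<psi>\<in>Bij (V - {r}) (B - {b}). (\<Prod>v\<in>V - {r}. (\<psi>(r:=b)) v) / (\<Prod>(u,w)\<in>P \<union> R \<times> {r}. (\<psi>(r:=b)) u - (\<psi>(r:=b)) w))"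
      using sum_Bij_insert[of r "V - {r}" B "\<lambda>\<phi>. (\<Prod>v\<in>V - {r}. \<phi> v) / (\<Prod>(u,w)\<in>P \<union> R \<times> {r}. \<phi> u - \<phi> w)"] fin finB
      by simp
    also have "\<dots> = (\<Sum>b\<in>B. \<Sum>\<psi>\<in>Bij (V - {r}) (B - {b}). wt (V - {r}) P R b \<psi>)"
    proof (intro sum.cong refl)
      fix b :: rat and \<psi> :: "'a \<Rightarrow> rat"
      have e1: "(\<Prod>v\<in>V - {r}. (\<psi>(r:=b)) v) = (\<Prod>v\<in>V - {r}. \<psi> v)" by (intro prod.cong) auto
      have djx: "P \<inter> R \<times> {r} = {}" using props by auto
      have "(\<Prod>(u,w)\<in>P \<union> R \<times> {r}. (\<psi>(r:=b)) u - (\<psi>(r:=b)) w)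
         = (\<Prod>(u,w)\<in>P. (\<psi>(r:=b)) u - (\<psi>(r:=b)) w) * (\<Prod>(u,w)\<in>R \<times> {r}. (\<psi>(r:=b)) u - (\<psi>(r:=b)) w)"
        using finP djx by (intro prod.union_disjoint) auto
      also have "(\<Prod>(u,w)\<in>P. (\<psi>(r:=b)) u - (\<psi>(r:=b)) w) = (\<Prod>(u,w)\<in>P. \<psi> u - \<psi> w)"
        using props by (intro prod.cong) auto
      also have "(\<Prod>(u,w)\<in>R \<times> {r}. (\<psi>(r:=b)) u - (\<psi>(r:=b)) w) = (\<Prod>u\<in>R. \<Prod>w\<in>{r}. (\<psi>(r:=b)) u - (\<psi>(r:=b)) w)"
        by (simp only: prod.cartesian_product)
      also have "\<dots> = (\<Prod>f\<in>R. \<psi> f - b)"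
        using props by (intro prod.cong) auto
      finally have e2: "(\<Prod>(u,w)\<in>P \<union> R \<times> {r}. (\<psi>(r:=b)) u - (\<psi>(r:=b)) w) = (\<Prod>(u,w)\<in>P. \<psi> u - \<psi> w) * (\<Prod>f\<in>R. \<psi> f - b)" .
      show "(\<Prod>v\<in>V - {r}. (\<psi>(r:=b)) v) / (\<Prod>(u,w)\<in>P \<union> R \<times> {r}. (\<psi>(r:=b)) u - (\<psi>(r:=b)) w) = wt (V - {r}) P R b \<psi>"
        unfolding e1 e2 wt_def ..
    qed
    also have "\<dots> = (\<Sum>b\<in>B. of_nat C * (\<Prod>b'\<in>B - {b}. b'/(b'-b)))"
    proof (rule sum.cong)
      fix b assume b: "b \<in> B"
      show "(\<Sum>\<psi>\<in>Bij (V - {r}) (B - {b}). wt (V - {r}) P R b \<psi>) = of_nat C * (\<Prod>b'\<in>B - {b}. b'/(b'-b))"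
        using C(2)[rule_format, of "B - {b}" b] finB b cB fin r by auto
    qed simp
    also have "\<dots> = of_nat C * (\<Sum>b\<in>B. (\<Prod>b'\<in>B - {b}. b'/(b'-b)))"
      by (simp add: sum_distrib_left)
    also have "(\<Sum>b\<in>B. (\<Prod>b'\<in>B - {b}. b'/(b'-b))) = 1" using pf_one[OF finB Bne] .
    finally show "tree_bracket_at V E r x = of_int c" using cs by simp
  qed
qed

end
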